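(* In the setting described in the context, all initial stabilizers in the decoding subgraph of a reliable logical Pauli product are $+1$.
   Context: Setting: logical qubits encoded in distance-$d$ unrotated surface codes (CSS codes), each initialized in $|\overline{0}\rangle$ (all physical qubits in $|0\rangle$, so $Z$ stabilizers are $+1$ and $X$ stabilizers are uniformly random), $|\overline{+}\rangle$ (all physical qubits in $|+\rangle$, so $X$ stabilizers are $+1$ and $Z$ stabilizers random), or a magic state $|\overline{T}\rangle$ assumed to have all stabilizers $+1$; followed by transversal logical Clifford gates, each followed by one round of stabilizer measurement (SE), and logical $\overline{Z}$/$\overline{X}$ measurements by measuring all data qubits in $Z$/$X$. Each logical measurement product corresponds to a logical Pauli operator that can be back-propagated through the Clifford circuit. Reliable logical Pauli product: with $n$ logical qubits and $m$ measurements, identify a measurement product with $\vec v\in\mathbb{Z}_2^m$; let $M\in\mathbb{Z}_2^{2n\times m}$ have entry $(i,j)$ (resp. $(n+i,j)$) equal to $1$ iff the back-propagation of measurement $j$ to initialization has an $\overline X$- (resp. $\overline Z$-) component on qubit $i$; let $B$ contain the unit vectors $\vec e_{x,i}$ (position $i$) and $\vec e_{z,i}$ (position $n+i$) if qubit $i$ starts in $|\overline T\rangle$, only $\vec e_{z,i}$ if it starts in $|\overline0\rangle$, only $\vec e_{x,i}$ if it starts in $|\overline+\rangle$. The product is reliable if $M\vec v\in\operatorname{span}B$. Decoding subgraph of a logical Pauli product $\overline P$: back-propagate $\overline P$ through the circuit, giving at each time step $t$ an operator $\overline P^t=\overline O_1^t\otimes\cdots\otimes\overline O_n^t$ with $\overline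 O_j^t\in\{\overline I,\overline X,\overline Y,\overline Z\}$. Include the $X$-stabilizer checks of qubit $j$ at step $t$ if $\overline O_j^t\in\{\overline X,\overline Y\}$ and the $Z$-stabilizer checks if $\overline O_j^t\in\{\overline Z,\overline Y\}$, where a check is the product of a stabilizer measurement outcome with the measured value(s) of its back-propagation through the preceding gate at the previous SE round (at the first round, a deterministically-$+1$ initial stabilizer forms a check by itself). The initial stabilizers of the subgraph are those stabilizers, at initialization, of the qubits and bases included in the subgraph. *)

theory Defs
  imports Main HOL.Modules "HOL-Library.Z2" "HOL-Library.Function_Algebras"
begin

text \<open>Binary symplectic representation of logical Pauli operators (phases ignored)
on n logical qubits: a vector p :: nat => bit, where p i (i < n) is the X-component on
qubit i and p (n + i) is the Z-component on qubit i (coordinates >= 2n unused).\<close>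

type_synonym pvec = "nat \<Rightarrow> bit"

definition scl :: "bit \<Rightarrow> pvec \<Rightarrow> pvec" where
  "scl c p = (\<lambda>i. c * p i)"

definition unitv :: "nat \<Rightarrow> pvec" where
  "unitv k = (\<lambda>i. if i = k then 1 else 0)"

datatype init_state = InitZero | InitPlus | InitT
datatype basis = XB | ZB
datatype pauli1 = PI | PX | PY | PZ

definition op_at :: "nat \<Rightarrow> pvec \<Rightarrow> nat \<Rightarrow> pauli1" where
  "op_at n p j = (if p j = 1 then (if p (n + j) = 1 then PY else PX)
                  else (if p (n + j) = 1 then PZ else PI))"

definition meas_pauli :: "nat \<Rightarrow> basis \<Rightarrow> nat \<Rightarrow> pvec" where
  "meas_pauli n b q = (case b of XB \<Rightarrow> unitv q | ZB \<Rightarrow> unitv (n + q))"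

definition symp :: "nat \<Rightarrow> pvec \<Rightarrow> pvec \<Rightarrow> bit" where
  "symp n p q = (\<Sum>i<n. p i * q (n + i) + p (n + i) * q i)"

definition supp_in :: "nat \<Rightarrow> pvec \<Rightarrow> bool" where
  "supp_in n p \<longleftrightarrow> (\<forall>i\<ge>2*n. p i = 0)"

text \<open>g is the action (on binary symplectic vectors) of back-propagating a Pauli through a
logical Clifford gate: a GF(2)-linear symplectic automorphism of the 2n-dim. space.\<close>
definition clifford_bp :: "nat \<Rightarrow> (pvec \<Rightarrow> pvec) \<Rightarrow> bool" where
  "clifford_bp n g \<longleftrightarrow>
     (\<forall>p q. g (p + q) = g p + g q) \<and>
     (\<forall>p. supp_in n p \<longrightarrow> supp_in n (g p)) \<and>
     bij_betw g {p. supp_in n p} {p. supp_in n p} \<and>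
     (\<forall>p q. supp_in n p \<longrightarrow> supp_in n q \<longrightarrow> symp n (g p) (g q) = symp n p q)"

text \<open>Time steps: 0 = initialization; gate t (1 <= t <= L) maps step t-1 to step t, and is
followed by SE round t.  G t is the back-propagation map of gate t.
bpto G s t p = back-propagation of p from step t to step s (s <= t).\<close>
fun bpto :: "(nat \<Rightarrow> pvec \<Rightarrow> pvec) \<Rightarrow> nat \<Rightarrow> nat \<Rightarrow> pvec \<Rightarrow> pvec" where
  "bpto G s 0 p = p"
| "bpto G s (Suc t) p = (if Suc t \<le> s then p else bpto G s t (G (Suc t) p))"

text \<open>Matrix M: column j is the back-propagation to initialization of measurement j
(qubit mq j, basis mb j, performed at step mt j).\<close>
definition Mmat :: "nat \<Rightarrow> (nat \<Rightarrow> pvec \<Rightarrow> pvec) \<Rightarrow> (nat \<Rightarrow> nat) \<Rightarrow> (nat \<Rightarrow> basis)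
    \<Rightarrow> (nat \<Rightarrow> nat) \<Rightarrow> nat \<Rightarrow> nat \<Rightarrow> bit" where
  "Mmat n G mq mb mt i j = bpto G 0 (mt j) (meas_pauli n (mb j) (mq j)) i"

definition mat_vec :: "(nat \<Rightarrow> nat \<Rightarrow> bit) \<Rightarrow> nat \<Rightarrow> (nat \<Rightarrow> bit) \<Rightarrow> pvec" where
  "mat_vec A m v = (\<lambda>i. \<Sum>j<m. A i j * v j)"

definition Bset :: "nat \<Rightarrow> (nat \<Rightarrow> init_state) \<Rightarrow> pvec set" where
  "Bset n init =
     {unitv i | i. i < n \<and> init i \<in> {InitT, InitPlus}} \<union>
     {unitv (n + i) | i. i < n \<and> init i \<in> {InitT, InitZero}}"

definition reliable :: "nat \<Rightarrow> (nat \<Rightarrow> init_state) \<Rightarrow> (nat \<Rightarrow> pvec \<Rightarrow> pvec) \<Rightarrow> (nat \<Rightarrow> nat)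
    \<Rightarrow> (nat \<Rightarrow> basis) \<Rightarrow> (nat \<Rightarrow> nat) \<Rightarrow> nat \<Rightarrow> (nat \<Rightarrow> bit) \<Rightarrow> bool" where
  "reliable n init G mq mb mt m v \<longleftrightarrow>
     mat_vec (Mmat n G mq mb mt) m v \<in> module.span scl (Bset n init)"

definition meas_at :: "nat \<Rightarrow> (nat \<Rightarrow> nat) \<Rightarrow> (nat \<Rightarrow> basis) \<Rightarrow> (nat \<Rightarrow> nat) \<Rightarrow> nat
    \<Rightarrow> (nat \<Rightarrow> bit) \<Rightarrow> nat \<Rightarrow> pvec" where
  "meas_at n mq mb mt m v t = (\<Sum>j | j < m \<and> mt j = t. scl (v j) (meas_pauli n (mb j) (mq j)))"

text \<open>Step-by-step back-propagation of the logical measurement product selected by v: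
bpstep ... k is the operator P^(L-k).\<close>
fun bpstep :: "nat \<Rightarrow> (nat \<Rightarrow> pvec \<Rightarrow> pvec) \<Rightarrow> (nat \<Rightarrow> nat) \<Rightarrow> (nat \<Rightarrow> basis) \<Rightarrow> (nat \<Rightarrow> nat)
    \<Rightarrow> nat \<Rightarrow> (nat \<Rightarrow> bit) \<Rightarrow> nat \<Rightarrow> nat \<Rightarrow> pvec" where
  "bpstep n G mq mb mt m v L 0 = meas_at n mq mb mt m v L"
| "bpstep n G mq mb mt m v L (Suc k) =
     G (L - k) (bpstep n G mq mb mt m v L k) + meas_at n mq mb mt m v (L - Suc k)"

definition Pt :: "nat \<Rightarrow> (nat \<Rightarrow> pvec \<Rightarrow> pvec) \<Rightarrow> (nat \<Rightarrow> nat) \<Rightarrow> (nat \<Rightarrow> basis) \<Rightarrow> (nat \<Rightarrow> nat)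
    \<Rightarrow> nat \<Rightarrow> (nat \<Rightarrow> bit) \<Rightarrow> nat \<Rightarrow> nat \<Rightarrow> pvec" where
  "Pt n G mq mb mt m v L t = bpstep n G mq mb mt m v L (L - t)"

definition subgraph_init_stabs :: "nat \<Rightarrow> pvec \<Rightarrow> (nat \<times> basis) set" where
  "subgraph_init_stabs n P0 =
     {(j, XB) | j. j < n \<and> op_at n P0 j \<in> {PX, PY}} \<union>
     {(j, ZB) | j. j < n \<and> op_at n P0 j \<in> {PZ, PY}}"

text \<open>Whether all initial stabilizers of type b on logical qubit j are deterministically +1:
|0bar> fixes Z-stabilizers (X random), |+bar> fixes X-stabilizers (Z random),
|Tbar> is assumed to have all stabilizers +1.\<close>
definition init_stab_plus1 :: "(nat \<Rightarrow> init_state) \<Rightarrow> nat \<Rightarrow> basis \<Rightarrow> bool" where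
  "init_stab_plus1 init j b \<longleftrightarrow>
     init j = InitT \<or> (init j = InitZero \<and> b = ZB) \<or> (init j = InitPlus \<and> b = XB)"

end

theory Submission
  imports Defs
begin

lemma module_scl: "module scl"
  by unfold_locales (auto simp: scl_def fun_eq_iff algebra_simps)

lemma sum_fun_app: "(\<Sum>a\<in>A. (f a :: nat \<Rightarrow> bit)) i = (\<Sum>a\<in>A. f a i)"
  by (induction A rule: infinite_finite_induct) auto

lemma span_coord_zero:
  assumes "p \<in> module.span scl S" "\<And>q. q \<in> S \<Longrightarrow> q k = 0"
  shows "p k = 0"
proof -
  from assms(1) obtain t r where p: "p = (\<Sum>a\<in>t. scl (r a) a)" "t \<subseteq> S"
    unfolding module.span_explicit[OF module_scl] by blast
  have "p k = (\<Sum>a\<in>t. r a * a k)" unfolding p(1) sum_fun_app by (simp add: scl_def)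
  also have "\<dots> = 0" using p(2) assms(2) by (auto intro!: sum.neutral)
  finally show ?thesis .
qed

lemma bpto_le: "t \<le> s \<Longrightarrow> bpto G s t p = p"
  by (induction t arbitrary: p) auto

lemma bpto_step: "s < t \<Longrightarrow> bpto G s t p = G (Suc s) (bpto G (Suc s) t p)"
proof (induction t arbitrary: p)
  case 0 then show ?case by simp
next
  case (Suc t)
  show ?case
  proof (cases "t = s")
    case True then show ?thesis by (simp add: bpto_le)
  next
    case False
    then have "s < t" using Suc.prems by simp
    then show ?thesis using Suc.IH by simp
  qed
qed

lemma cb_zero: assumes "clifford_bp n g" shows "g 0 = 0"
proof -
  have "g (0 + 0) = g 0 + g 0" using assms unfolding clifford_bp_def by blast
  then show ?thesis by simp
qed

lemma cb_sum: assumes "clifford_bp n g" shows "g (\<Sum>a\<in>A. f a) = (\<Sum>a\<in>A. g (f a))"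
proof (induction A rule: infinite_finite_induct)
  case (infinite A)
  show ?case unfolding sum.infinite[OF infinite] by (rule cb_zero[OF assms])
next
  case (insert x F)
  have "g (sum f (insert x F)) = g (f x + sum f F)" by (subst sum.insert[OF insert(1,2)]) (rule refl)
  also have "\<dots> = g (f x) + g (sum f F)" using assms unfolding clifford_bp_def by blast
  finally show ?case using insert by (simp only: sum.insert[OF insert(1,2)])
qed (simp_all only: sum.infinite sum.empty cb_zero[OF assms])

lemma cb_scl: assumes "clifford_bp n g" shows "g (scl c p) = scl c (g p)"
proof (cases "c = 0")
  case True
  then show ?thesis using cb_zero[OF assms] by (simp add: scl_def zero_fun_def)
next
  case False
  then have "c = 1" by simp
  have s1: "\<And>q. scl 1 q = q" unfolding scl_def mult_1 by (rule refl)
  show ?thesis unfolding \<open>c = 1\<close> s1 ..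
qed

lemma bpstep_eq:
  assumes gates: "\<And>t. 1 \<le> t \<Longrightarrow> t \<le> L \<Longrightarrow> clifford_bp n (G t)"
    and meas_ok: "\<And>j. j < m \<Longrightarrow> mq j < n \<and> mt j \<le> L"
  shows "k \<le> L \<Longrightarrow> bpstep n G mq mb mt m v L k =
    (\<Sum>j | j < m \<and> L - k \<le> mt j. scl (v j) (bpto G (L - k) (mt j) (meas_pauli n (mb j) (mq j))))"
proof (induction k)
  case 0
  have "{j. j < m \<and> L \<le> mt j} = {j. j < m \<and> mt j = L}" using meas_ok by force
  then show ?case by (simp add: meas_at_def bpto_le)
next
  case (Suc k)
  let ?f = "\<lambda>s j. scl (v j) (bpto G s (mt j) (meas_pauli n (mb j) (mq j)))"
  have g: "clifford_bp n (G (L - k))" using gates Suc.prems by simp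
  have "bpstep n G mq mb mt m v L (Suc k) =
     (\<Sum>j | j < m \<and> L - k \<le> mt j. G (L - k) (?f (L - k) j)) + meas_at n mq mb mt m v (L - Suc k)"
    using Suc by (simp add: cb_sum[OF g])
  also have "(\<Sum>j | j < m \<and> L - k \<le> mt j. G (L - k) (?f (L - k) j)) =
      (\<Sum>j | j < m \<and> L - k \<le> mt j. ?f (L - Suc k) j)"
  proof (rule sum.cong[OF refl])
    fix j assume "j \<in> {j. j < m \<and> L - k \<le> mt j}"
    then have "L - Suc k < mt j" using Suc.prems by auto
    moreover have "Suc (L - Suc k) = L - k" using Suc.prems by simp
    ultimately show "G (L - k) (?f (L - k) j) = ?f (L - Suc k) j"
      by (simp add: cb_scl[OF g] bpto_step)
  qed
  also have "meas_at n mq mb mt m v (L - Suc k) = (\<Sum>j | j < m \<and> mt j = L - Suc k. ?f (L - Suc k) j)"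
    by (simp add: meas_at_def bpto_le)
  also have "(\<Sum>j | j < m \<and> L - k \<le> mt j. ?f (L - Suc k) j) + \<dots> =
      (\<Sum>j \<in> {j. j < m \<and> L - k \<le> mt j} \<union> {j. j < m \<and> mt j = L - Suc k}. ?f (L - Suc k) j)"
    by (rule sum.union_disjoint[symmetric]) (use Suc.prems in auto)
  also have "{j. j < m \<and> L - k \<le> mt j} \<union> {j. j < m \<and> mt j = L - Suc k} = {j. j < m \<and> L - Suc k \<le> mt j}"
    using Suc.prems by auto
  finally show ?case .
qed

theorem lemma2:
  fixes n m L :: nat
    and init :: "nat \<Rightarrow> init_state"
    and G :: "nat \<Rightarrow> pvec \<Rightarrow> pvec"
    and mq :: "nat \<Rightarrow> nat" and mb :: "nat \<Rightarrow> basis" and mt :: "nat \<Rightarrow> nat"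
    and v :: "nat \<Rightarrow> bit"
  assumes gates: "\<And>t. 1 \<le> t \<Longrightarrow> t \<le> L \<Longrightarrow> clifford_bp n (G t)"
    and meas_ok: "\<And>j. j < m \<Longrightarrow> mq j < n \<and> mt j \<le> L"
    and rel: "reliable n init G mq mb mt m v"
  shows "\<forall>(j, b) \<in> subgraph_init_stabs n (Pt n G mq mb mt m v L 0). init_stab_plus1 init j b"
proof -
  let ?P = "Pt n G mq mb mt m v L 0"
  have "?P = bpstep n G mq mb mt m v L L" by (simp add: Pt_def)
  also have "\<dots> = (\<Sum>j | j < m. scl (v j) (bpto G 0 (mt j) (meas_pauli n (mb j) (mq j))))"
    using bpstep_eq[OF gates meas_ok, where k=L] by simp
  also have "\<dots> = mat_vec (Mmat n G mq mb mt) m v"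
  proof (rule ext)
    fix i
    have e: "{j. j < m} = {..<m}" by auto
    show "(\<Sum>j | j < m. scl (v j) (bpto G 0 (mt j) (meas_pauli n (mb j) (mq j)))) i = mat_vec (Mmat n G mq mb mt) m v i"
      unfolding sum_fun_app mat_vec_def Mmat_def scl_def e by (rule sum.cong[OF refl]) (rule mult.commute)
  qed
  finally have P: "?P \<in> module.span scl (Bset n init)" using rel by (simp add: reliable_def)
  show ?thesis
  proof (clarify)
    fix j b assume jb: "(j, b) \<in> subgraph_init_stabs n ?P"
    then have jn: "j < n" by (auto simp: subgraph_init_stabs_def)
    show "init_stab_plus1 init j b"
    proof (cases b)
      case XB
      then have "?P j = 1" using jb by (auto simp: subgraph_init_stabs_def op_at_def split: if_splits)
      moreover have "init j \<notin> {InitT, InitPlus} \<Longrightarrow> ?P j = 0"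
        by (rule span_coord_zero[OF P]) (use jn in \<open>auto simp: Bset_def unitv_def\<close>)
      ultimately show ?thesis using XB by (cases "init j") (auto simp: init_stab_plus1_def)
    next
      case ZB
      then have "?P (n + j) = 1" using jb by (auto simp: subgraph_init_stabs_def op_at_def split: if_splits)
      moreover have "init j \<notin> {InitT, InitZero} \<Longrightarrow> ?P (n + j) = 0"
        by (rule span_coord_zero[OF P]) (use jn in \<open>auto simp: Bset_def unitv_def\<close>)
      ultimately show ?thesis using ZB by (cases "init j") (auto simp: init_stab_plus1_def)
    qed
  qed
qed

end
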